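(* In the setting described in the context (BFL with Byzantine agents, under hypotheses (i) and (ii)), for every non-faulty agent $i\in\{1,\dots,n-\phi\}$ and every $\theta\neq\theta^*$, $$\frac{1}{t^2}\sum_{r=1}^{t}\Big(\sum_{j=1}^{n-\phi}\Phi_{ij}(t,r+1)\sum_{k=1}^{r}\mathcal{L}^j_k(\theta,\theta^* )-r\sum_{j=1}^{n-\phi}\pi_j(r+1)H_j(\theta,\theta^* )\Big)\longrightarrow 0\quad\text{almost surely as }t\to\infty.$$
   Context: Setting: $n$ agents on a directed graph $G=(\mathcal{V},\mathcal{E})$, $\mathcal{V}=\{1,\dots,n\}$, $\mathcal{I}_i$ the incoming neighbors of $i$; synchronous iterations $t=1,2,\dots$; an unknown set $\mathcal{F}$ of $\phi\le f$ Byzantine agents behaving arbitrarily (arbitrary, inconsistent messages, full knowledge, collusion); the non-faulty agents are indexed $1,\dots,n-\phi$; missing messages are replaced by a default value. Finite hypothesis set $\Theta=\{\theta_1,\dots,\theta_m\}$ with true state $\theta^*$. Agent $i$ has finite signal space $\mathcal{S}_i$ and likelihoods $\ell_i(\cdot\mid\theta)$ with full support; in iteration $t$ it observes $s_t^i\sim\ell_i(\cdot\mid\theta^* )$, independent across agents and iterations. $\ell_i(s_{1,t}^i\mid\theta)=\prod_{r=1}^t\ell_i(s_r^i\mid\theta)$. Define $\mathcal{L}^j_k(\theta,\theta^* )=\log\frac{\ell_j(s_k^j\mid\theta)}{\ell_j(s_k^j\mid\theta^* )}$ and $H_j(\theta,\theta^* )=\sum_{w\in\mathcal{S}_j}\ell_j(w\mid\theta^*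 )\log\frac{\ell_j(w\mid\theta)}{\ell_j(w\mid\theta^* )}=-D(\ell_j(\cdot\mid\theta^* )\|\ell_j(\cdot\mid\theta))$. An $m$-dimensional reduced graph of $G$ is obtained by removing all faulty nodes and their incident links and then, for each non-faulty node, removing up to $mf$ additional incoming links; a source component is a strongly connected component with no incoming links from outside it. Hypotheses: (i) every $m$-dimensional reduced graph of $G$ has a unique source component; (ii) for every $\theta\ne\theta^*$ and every $m$-dimensional reduced graph $\mathcal{H}$ with source component $\mathcal{S}_{\mathcal{H}}$, $\sum_{j\in\mathcal{S}_{\mathcal{H}}}D(\ell_j(\cdot\mid\theta^* )\|\ell_j(\cdot\mid\theta))\neq0$. Let $\chi$ be the number of $m$-dimensional reduced graphs of $G$. Algorithm BFL: One-Iter at agent $i$ with input $x^i\in\mathbb{R}^m$ transmits $x^i$, receives the multiset $R^i$ from incoming neighbors, forms $Z^i$ by adding, for every sub-multiset $C\subseteq R^i\cup\{x^i\}$ of size $(m+1)f+1$, a Tverberg point of $C$ (a point in $\bigcap_{k=1}^{f+1}\mathrm{Conv}(Y_k)$ for a partition of $C$ into $f+1$ nonempty parts with nonempty such intersection), and returns $\frac{1}{1+|Z^i|}(x^i+\sum_{z\in Z^i}z)$. BFL initializes $\mu_0^i$ uniform on $\Theta$ and in iteration $t$ sets $\eta_t^i=\text{One-Iter}(\log\mu_{t-1}^i)$, observes $s_t^i$, and sets $\mu_t^i(\theta)\propto\ell_i(s_{1,t}^i\mid\theta)\exp(\eta_t^i(\theta))$ (normalized over $\Theta$). Matrix representation (known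 property of One-Iter under hypothesis (i)): for each $t\ge1$ there is a (random) row-stochastic matrix $\mathbf{A}[t]\in\mathbb{R}^{(n-\phi)\times(n-\phi)}$ with $\eta_t^i(\theta)=\sum_{j=1}^{n-\phi}\mathbf{A}_{ij}[t]\log\mu_{t-1}^j(\theta)$ for all non-faulty $i$ and all $\theta$, and $\mathbf{A}[t]\ge\beta\mathbf{H}[t]$ entrywise for the adjacency matrix $\mathbf{H}[t]$ of some $m$-dimensional reduced graph, where $0<\beta\le1$ depends only on $G$. Let $\Phi(t,r)=\mathbf{A}[t]\mathbf{A}[t-1]\cdots\mathbf{A}[r]$ for $1\le r\le t$ and $\Phi(t,t+1)=\mathbf{I}$. Then $\lim_{t\to\infty}\Phi(t,r)=\mathbf{1}\pi(r)$ for a stochastic row vector $\pi(r)\in\mathbb{R}^{n-\phi}$, and $|\Phi_{ij}(t,r)-\pi_j(r)|\le(1-\beta^{\nu})^{\lceil (t-r+1)/\nu\rceil}$ for all $t\ge r\ge1$, where $\nu=\chi(n-\phi)$. $\Phi_{ij}$ and $\pi_j$ refer to these objects. *)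

theory Defs
  imports "HOL-Probability.Probability"
begin

text \<open>Agents are the non-faulty ones, indexed 1..N (N = n - phi).
  Square matrices over the non-faulty agents are functions nat => nat => real,
  only the entries with indices in {1..N} being relevant.\<close>

definition ident_mat :: "nat \<Rightarrow> nat \<Rightarrow> real" where
  "ident_mat i j = (if i = j then 1 else 0)"

definition mat_mult :: "nat \<Rightarrow> (nat \<Rightarrow> nat \<Rightarrow> real) \<Rightarrow> (nat \<Rightarrow> nat \<Rightarrow> real)
    \<Rightarrow> nat \<Rightarrow> nat \<Rightarrow> real" where
  "mat_mult N X Y i j = (\<Sum>k\<in>{1..N}. X i k * Y k j)"

primrec Phi :: "nat \<Rightarrow> (nat \<Rightarrow> nat \<Rightarrow> nat \<Rightarrow> real) \<Rightarrow> nat \<Rightarrow> nat \<Rightarrow> nat \<Rightarrow> nat \<Rightarrow> real" where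
  "Phi N A 0 r = ident_mat"
| "Phi N A (Suc t) r =
     (if r \<le> Suc t then mat_mult N (A (Suc t)) (Phi N A t r) else ident_mat)"

definition LLR :: "(nat \<Rightarrow> 's \<Rightarrow> 'h \<Rightarrow> real) \<Rightarrow> (nat \<Rightarrow> nat \<Rightarrow> 'a \<Rightarrow> 's)
    \<Rightarrow> nat \<Rightarrow> nat \<Rightarrow> 'h \<Rightarrow> 'h \<Rightarrow> 'a \<Rightarrow> real" where
  "LLR lik s j k \<theta> \<theta>s \<omega> = ln (lik j (s j k \<omega>) \<theta> / lik j (s j k \<omega>) \<theta>s)"

definition Hdiv :: "(nat \<Rightarrow> 's set) \<Rightarrow> (nat \<Rightarrow> 's \<Rightarrow> 'h \<Rightarrow> real) \<Rightarrow> nat \<Rightarrow> 'h \<Rightarrow> 'h \<Rightarrow> real" where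
  "Hdiv S lik j \<theta> \<theta>s = (\<Sum>w\<in>S j. lik j w \<theta>s * ln (lik j w \<theta> / lik j w \<theta>s))"

end

theory Submission
  imports Defs
begin


lemma cesaro0:
  fixes E :: "nat \<Rightarrow> real"
  assumes E0: "\<And>r. E r \<ge> 0"
    and ev: "\<And>\<epsilon>. \<epsilon> > 0 \<Longrightarrow> eventually (\<lambda>r. E r \<le> \<epsilon> * real r) sequentially"
  shows "(\<lambda>t. (1 / (real t)\<^sup>2) * (\<Sum>r=1..t. E r)) \<longlonglongrightarrow> 0"
proof (rule LIMSEQ_I)
  fix \<epsilon> :: real assume \<epsilon>: "\<epsilon> > 0"
  from ev[of "\<epsilon>/2"] \<epsilon> obtain R where R: "\<And>r. r \<ge> R \<Longrightarrow> E r \<le> \<epsilon>/2 * real r"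
    by (auto simp: eventually_sequentially)
  define M0 where "M0 = (\<Sum>r<R. E r)"
  have M0: "E r \<le> M0" if "r < R" for r
    unfolding M0_def using that E0 by (intro member_le_sum) auto
  have M00: "M0 \<ge> 0" unfolding M0_def using E0 by (simp add: sum_nonneg)
  obtain T :: nat where T: "real T > 2 * M0 / \<epsilon>" using reals_Archimedean2 by blast
  show "\<exists>no. \<forall>n\<ge>no. norm ((1 / (real n)\<^sup>2) * (\<Sum>r=1..n. E r) - 0) < \<epsilon>"
  proof (intro exI[of _ "T+1"] allI impI)
    fix t assume t: "t \<ge> T + 1"
    have tpos: "real t > 0" using t by simp
    have "E r \<le> M0 + \<epsilon>/2 * real t" if "r \<in> {1..t}" for r
    proof (cases "r < R")
      case True
      have "0 \<le> \<epsilon>/2 * real t" using \<epsilon> by simp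
      then show ?thesis using M0[OF True] by linarith
    next
      case False
      then have "E r \<le> \<epsilon>/2 * real r" using R by simp
      also have "\<dots> \<le> \<epsilon>/2 * real t" using that \<epsilon> by (intro mult_left_mono) auto
      finally show ?thesis using M00 by simp
    qed
    then have "(\<Sum>r=1..t. E r) \<le> (\<Sum>r=1..t. M0 + \<epsilon>/2 * real t)" by (rule sum_mono)
    also have "\<dots> = real t * (M0 + \<epsilon>/2 * real t)" by simp
    finally have S: "(\<Sum>r=1..t. E r) \<le> real t * (M0 + \<epsilon>/2 * real t)" .
    have S0: "(\<Sum>r=1..t. E r) \<ge> 0" using E0 by (simp add: sum_nonneg)
    have "(1 / (real t)\<^sup>2) * (\<Sum>r=1..t. E r) \<le> (1 / (real t)\<^sup>2) * (real t * (M0 + \<epsilon>/2 * real t))"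
      using S by (intro mult_left_mono) auto
    also have "\<dots> = M0 / real t + \<epsilon>/2" using tpos by (simp add: field_simps power2_eq_square)
    also have "M0 / real t < \<epsilon>/2"
    proof -
      have "2 * M0 / \<epsilon> < real t" using T t by simp
      then have "2 * M0 < real t * \<epsilon>" using \<epsilon> by (simp add: field_simps)
      then show ?thesis using tpos by (simp add: field_simps)
    qed
    finally have "(1 / (real t)\<^sup>2) * (\<Sum>r=1..t. E r) < \<epsilon>" by simp
    then show "norm ((1 / (real t)\<^sup>2) * (\<Sum>r=1..t. E r) - 0) < \<epsilon>"
      using S0 by simp
  qed
qed

lemma geo_bound:
  fixes \<rho> :: real
  assumes "0 \<le> \<rho>" "\<rho> < 1"
  shows "(\<Sum>r\<in>{1..<t}. \<rho> ^ (t - r)) \<le> 1 / (1 - \<rho>)"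
proof -
  have "(\<Sum>r\<in>{1..<t}. \<rho> ^ (t - r)) = (\<Sum>i\<in>{1..<t}. \<rho> ^ (t - (t + 1 - Suc i)))"
    by (rule sum.atLeastLessThan_rev)
  also have "\<dots> = (\<Sum>i\<in>{1..<t}. \<rho> ^ i)" by (intro sum.cong) auto
  also have "\<dots> \<le> (\<Sum>i<t. \<rho> ^ i)" using assms by (intro sum_mono2) auto
  also have "\<dots> = (1 - \<rho> ^ t) / (1 - \<rho>)" using assms by (simp add: sum_gp_strict)
  also have "\<dots> \<le> 1 / (1 - \<rho>)" using assms by (intro divide_right_mono) auto
  finally show ?thesis .
qed

lemma det_limit:
  fixes Ph :: "nat \<Rightarrow> nat \<Rightarrow> nat \<Rightarrow> real" and p :: "nat \<Rightarrow> nat \<Rightarrow> real"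
    and L :: "nat \<Rightarrow> nat \<Rightarrow> real" and H :: "nat \<Rightarrow> real" and C \<rho> :: real
  assumes C0: "C \<ge> 0" and CL: "\<And>j k. j \<in> {1..N} \<Longrightarrow> k \<ge> 1 \<Longrightarrow> \<bar>L j k\<bar> \<le> C"
    and \<rho>: "0 \<le> \<rho>" "\<rho> < 1"
    and rate: "\<And>t r j. 1 \<le> r \<Longrightarrow> r < t \<Longrightarrow> j \<in> {1..N} \<Longrightarrow> \<bar>Ph t (r+1) j - p (r+1) j\<bar> \<le> \<rho> ^ (t - r)"
    and last: "\<And>t j. j \<in> {1..N} \<Longrightarrow> \<bar>Ph t (t+1) j - p (t+1) j\<bar> \<le> 2"
    and pb: "\<And>r j. j \<in> {1..N} \<Longrightarrow> r \<ge> 1 \<Longrightarrow> \<bar>p r j\<bar> \<le> 1"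
    and slln: "\<And>j \<epsilon>. j \<in> {1..N} \<Longrightarrow> \<epsilon> > 0 \<Longrightarrow>
        eventually (\<lambda>r. \<bar>(\<Sum>k=1..r. L j k) - real r * H j\<bar> \<le> \<epsilon> * real r) sequentially"
  shows "(\<lambda>t. (1 / (real t)\<^sup>2) * (\<Sum>r=1..t. (\<Sum>j=1..N. Ph t (r+1) j * (\<Sum>k=1..r. L j k))
            - real r * (\<Sum>j=1..N. p (r+1) j * H j))) \<longlonglongrightarrow> 0"
proof -
  define E where "E r = (\<Sum>j=1..N. \<bar>(\<Sum>k=1..r. L j k) - real r * H j\<bar>)" for r
  define g where "g t r = (if r < t then \<rho> ^ (t - r) else 2)" for t r :: nat
  define K where "K = real N * C * (1 / (1 - \<rho>) + 2)"
  have E0: "E r \<ge> 0" for r unfolding E_def by (simp add: sum_nonneg)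
  have Eev: "eventually (\<lambda>r. E r \<le> \<epsilon> * real r) sequentially" if \<epsilon>: "\<epsilon> > 0" for \<epsilon>
  proof (cases "N = 0")
    case True then show ?thesis using \<epsilon> by (simp add: E_def)
  next
    case False
    have "eventually (\<lambda>r. \<forall>j\<in>{1..N}. \<bar>(\<Sum>k=1..r. L j k) - real r * H j\<bar> \<le> \<epsilon> / N * real r) sequentially"
      using \<epsilon> False by (intro eventually_ball_finite ballI slln) auto
    then show ?thesis
    proof eventually_elim
      case (elim r)
      have "E r \<le> (\<Sum>j=1..N. \<epsilon> / N * real r)" unfolding E_def using elim by (intro sum_mono) auto
      also have "\<dots> = \<epsilon> * real r" using False by simp
      finally show ?case .
    qed
  qed
  have SC: "\<bar>\<Sum>k=1..r. L j k\<bar> \<le> C * real r" if "j \<in> {1..N}" for j r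
  proof -
    have "\<bar>\<Sum>k=1..r. L j k\<bar> \<le> (\<Sum>k=1..r. \<bar>L j k\<bar>)" by (rule sum_abs)
    also have "\<dots> \<le> (\<Sum>k=1..r. C)" using that by (intro sum_mono CL) auto
    finally show ?thesis by (simp add: mult.commute)
  qed
  have gb: "\<bar>Ph t (r+1) j - p (r+1) j\<bar> \<le> g t r" if "1 \<le> r" "r \<le> t" "j \<in> {1..N}" for t r j
    using that rate last unfolding g_def by (cases "r < t") auto
  have g0: "g t r \<ge> 0" for t r unfolding g_def using \<rho> by auto
  have step1: "\<bar>(\<Sum>j=1..N. Ph t (r+1) j * (\<Sum>k=1..r. L j k)) - real r * (\<Sum>j=1..N. p (r+1) j * H j)\<bar>
      \<le> real N * C * real t * g t r + E r" if r: "1 \<le> r" "r \<le> t" for t r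
  proof -
    have eq: "(\<Sum>j=1..N. Ph t (r+1) j * (\<Sum>k=1..r. L j k)) - real r * (\<Sum>j=1..N. p (r+1) j * H j)
        = (\<Sum>j=1..N. (Ph t (r+1) j - p (r+1) j) * (\<Sum>k=1..r. L j k))
          + (\<Sum>j=1..N. p (r+1) j * ((\<Sum>k=1..r. L j k) - real r * H j))"
      by (simp add: sum_distrib_left algebra_simps sum.distrib sum_subtractf)
    have a: "\<bar>\<Sum>j=1..N. (Ph t (r+1) j - p (r+1) j) * (\<Sum>k=1..r. L j k)\<bar> \<le> real N * C * real t * g t r"
    proof -
      have "\<bar>\<Sum>j=1..N. (Ph t (r+1) j - p (r+1) j) * (\<Sum>k=1..r. L j k)\<bar>
          \<le> (\<Sum>j=1..N. \<bar>(Ph t (r+1) j - p (r+1) j) * (\<Sum>k=1..r. L j k)\<bar>)" by (rule sum_abs)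
      also have "\<dots> \<le> (\<Sum>j=1..N. g t r * (C * real t))"
      proof (intro sum_mono)
        fix j assume j: "j \<in> {1..N}"
        have "\<bar>(Ph t (r+1) j - p (r+1) j) * (\<Sum>k=1..r. L j k)\<bar>
            = \<bar>Ph t (r+1) j - p (r+1) j\<bar> * \<bar>\<Sum>k=1..r. L j k\<bar>" by (simp add: abs_mult)
        also have "\<dots> \<le> g t r * (C * real r)"
          using gb[OF r j] SC[OF j] by (intro mult_mono) auto
        also have "\<dots> \<le> g t r * (C * real t)" using g0 C0 r by (intro mult_left_mono) auto
        finally show "\<bar>(Ph t (r+1) j - p (r+1) j) * (\<Sum>k=1..r. L j k)\<bar> \<le> g t r * (C * real t)" .
      qed
      also have "\<dots> = real N * C * real t * g t r" by simp
      finally show ?thesis .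
    qed
    have b: "\<bar>\<Sum>j=1..N. p (r+1) j * ((\<Sum>k=1..r. L j k) - real r * H j)\<bar> \<le> E r"
    proof -
      have "\<bar>\<Sum>j=1..N. p (r+1) j * ((\<Sum>k=1..r. L j k) - real r * H j)\<bar>
          \<le> (\<Sum>j=1..N. \<bar>p (r+1) j * ((\<Sum>k=1..r. L j k) - real r * H j)\<bar>)" by (rule sum_abs)
      also have "\<dots> \<le> E r" unfolding E_def
      proof (intro sum_mono)
        fix j assume j: "j \<in> {1..N}"
        have "\<bar>p (r+1) j * ((\<Sum>k=1..r. L j k) - real r * H j)\<bar>
           = \<bar>p (r+1) j\<bar> * \<bar>(\<Sum>k=1..r. L j k) - real r * H j\<bar>" by (simp add: abs_mult)
        also have "\<dots> \<le> 1 * \<bar>(\<Sum>k=1..r. L j k) - real r * H j\<bar>"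
          using pb[OF j] by (intro mult_right_mono) auto
        finally show "\<bar>p (r+1) j * ((\<Sum>k=1..r. L j k) - real r * H j)\<bar> \<le> \<bar>(\<Sum>k=1..r. L j k) - real r * H j\<bar>" by simp
      qed
      finally show ?thesis .
    qed
    show ?thesis unfolding eq using a b by linarith
  qed
  have gsum: "(\<Sum>r=1..t. g t r) \<le> 1 / (1 - \<rho>) + 2" if "t \<ge> 1" for t
  proof -
    have "{1..t} = insert t {1..<t}" using that by auto
    then have "(\<Sum>r=1..t. g t r) = g t t + (\<Sum>r\<in>{1..<t}. g t r)" by simp
    also have "(\<Sum>r\<in>{1..<t}. g t r) = (\<Sum>r\<in>{1..<t}. \<rho> ^ (t - r))" unfolding g_def by (intro sum.cong) auto
    also have "g t t = 2" unfolding g_def by simp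
    finally show ?thesis using geo_bound[OF \<rho>, of t] by simp
  qed
  show ?thesis
  proof (rule Lim_null_comparison)
    show "eventually (\<lambda>t. norm ((1 / (real t)\<^sup>2) * (\<Sum>r=1..t. (\<Sum>j=1..N. Ph t (r+1) j * (\<Sum>k=1..r. L j k))
            - real r * (\<Sum>j=1..N. p (r+1) j * H j))) \<le> K / real t + (1 / (real t)\<^sup>2) * (\<Sum>r=1..t. E r)) sequentially"
      unfolding eventually_sequentially
    proof (intro exI[of _ 1] allI impI)
      fix t :: nat assume t: "t \<ge> 1"
      have "\<bar>\<Sum>r=1..t. (\<Sum>j=1..N. Ph t (r+1) j * (\<Sum>k=1..r. L j k)) - real r * (\<Sum>j=1..N. p (r+1) j * H j)\<bar>
          \<le> (\<Sum>r=1..t. \<bar>(\<Sum>j=1..N. Ph t (r+1) j * (\<Sum>k=1..r. L j k)) - real r * (\<Sum>j=1..N. p (r+1) j * H j)\<bar>)"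
        by (rule sum_abs)
      also have "\<dots> \<le> (\<Sum>r=1..t. real N * C * real t * g t r + E r)"
        by (intro sum_mono step1) auto
      also have "\<dots> = real N * C * real t * (\<Sum>r=1..t. g t r) + (\<Sum>r=1..t. E r)"
        by (simp add: sum.distrib sum_distrib_left)
      also have "\<dots> \<le> real N * C * real t * (1 / (1 - \<rho>) + 2) + (\<Sum>r=1..t. E r)"
        using gsum[OF t] C0 by (intro add_right_mono mult_left_mono) auto
      finally have X: "\<bar>\<Sum>r=1..t. (\<Sum>j=1..N. Ph t (r+1) j * (\<Sum>k=1..r. L j k)) - real r * (\<Sum>j=1..N. p (r+1) j * H j)\<bar>
          \<le> real t * K + (\<Sum>r=1..t. E r)" unfolding K_def by (simp add: algebra_simps)
      have tp: "real t > 0" using t by simp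
      have "norm ((1 / (real t)\<^sup>2) * (\<Sum>r=1..t. (\<Sum>j=1..N. Ph t (r+1) j * (\<Sum>k=1..r. L j k))
            - real r * (\<Sum>j=1..N. p (r+1) j * H j)))
          = (1 / (real t)\<^sup>2) * \<bar>\<Sum>r=1..t. (\<Sum>j=1..N. Ph t (r+1) j * (\<Sum>k=1..r. L j k)) - real r * (\<Sum>j=1..N. p (r+1) j * H j)\<bar>"
        by (simp add: abs_mult)
      also have "\<dots> \<le> (1 / (real t)\<^sup>2) * (real t * K + (\<Sum>r=1..t. E r))"
        using X by (intro mult_left_mono) auto
      also have "\<dots> = K / real t + (1 / (real t)\<^sup>2) * (\<Sum>r=1..t. E r)"
        using tp by (simp add: field_simps power2_eq_square)
      finally show "norm ((1 / (real t)\<^sup>2) * (\<Sum>r=1..t. (\<Sum>j=1..N. Ph t (r+1) j * (\<Sum>k=1..r. L j k))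
            - real r * (\<Sum>j=1..N. p (r+1) j * H j))) \<le> K / real t + (1 / (real t)\<^sup>2) * (\<Sum>r=1..t. E r)" .
    qed
    have "(\<lambda>t. K / real t) \<longlonglongrightarrow> 0" by (intro tendsto_divide_0[OF tendsto_const] filterlim_at_top_imp_at_infinity filterlim_real_sequentially)
    then show "(\<lambda>t. K / real t + (1 / (real t)\<^sup>2) * (\<Sum>r=1..t. E r)) \<longlonglongrightarrow> 0"
      using tendsto_add[OF _ cesaro0[OF E0 Eev]] by simp
  qed
qed



lemma (in prob_space) indep_sets_reindex:
  assumes ind: "indep_sets F (f ` I)" and inj: "inj_on f I"
  shows "indep_sets (\<lambda>i. F (f i)) I"
  unfolding indep_sets_def
proof (intro conjI ballI allI impI)
  fix i assume "i \<in> I" then show "F (f i) \<subseteq> events" using ind by (auto simp: indep_sets_def)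
next
  fix J A assume J: "J \<subseteq> I" "J \<noteq> {}" "finite J" and A: "A \<in> Pi J (\<lambda>i. F (f i))"
  define B where "B y = A (the_inv_into J f y)" for y
  have injJ: "inj_on f J" using inj J(1) by (rule inj_on_subset)
  have Bf: "B (f j) = A j" if "j \<in> J" for j unfolding B_def using the_inv_into_f_f[OF injJ that] by simp
  have B: "B \<in> Pi (f ` J) F" using A Bf by auto
  have "prob (\<Inter>y\<in>f ` J. B y) = (\<Prod>y\<in>f ` J. prob (B y))"
    using ind J B unfolding indep_sets_def by (meson finite_imageI image_is_empty image_mono)
  moreover have "(\<Inter>y\<in>f ` J. B y) = (\<Inter>j\<in>J. A j)" using Bf by auto
  moreover have "(\<Prod>y\<in>f ` J. prob (B y)) = (\<Prod>j\<in>J. prob (A j))"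
    using prod.reindex[OF injJ, of "\<lambda>y. prob (B y)"] Bf by simp
  ultimately show "prob (\<Inter>j\<in>J. A j) = (\<Prod>j\<in>J. prob (A j))" by simp
qed

lemma (in prob_space) indep_vars_reindex:
  assumes "indep_vars M' X (f ` I)" "inj_on f I"
  shows "indep_vars (\<lambda>i. M' (f i)) (\<lambda>i. X (f i)) I"
  using assms unfolding indep_vars_def2
  by (auto intro: indep_sets_reindex[where F = "\<lambda>i. {X i -` A \<inter> space M |A. A \<in> sets (M' i)}"])

lemma Phi_id: "Phi N A t (t+1) = ident_mat"
  by (cases t) auto

theorem lemma3:
  fixes M :: "'a measure"
    and N :: nat
    and S :: "nat \<Rightarrow> 's set"
    and lik :: "nat \<Rightarrow> 's \<Rightarrow> 'h::finite \<Rightarrow> real"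
    and \<theta>s :: 'h
    and s :: "nat \<Rightarrow> nat \<Rightarrow> 'a \<Rightarrow> 's"
    and A :: "nat \<Rightarrow> 'a \<Rightarrow> nat \<Rightarrow> nat \<Rightarrow> real"
    and \<pi> :: "nat \<Rightarrow> 'a \<Rightarrow> nat \<Rightarrow> real"
    and \<beta> :: real and \<nu> :: nat
    and i :: nat and \<theta> :: 'h
  assumes M: "prob_space M"
    and S_fin: "\<And>j. j \<in> {1..N} \<Longrightarrow> finite (S j) \<and> S j \<noteq> {}"
    and lik_pos: "\<And>j w \<theta>'. j \<in> {1..N} \<Longrightarrow> w \<in> S j \<Longrightarrow> lik j w \<theta>' > 0"
    and lik_sum: "\<And>j \<theta>'. j \<in> {1..N} \<Longrightarrow> (\<Sum>w\<in>S j. lik j w \<theta>') = 1"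
    and s_range: "\<And>j k \<omega>. j \<in> {1..N} \<Longrightarrow> k \<ge> 1 \<Longrightarrow> \<omega> \<in> space M \<Longrightarrow> s j k \<omega> \<in> S j"
    and s_indep: "prob_space.indep_vars M (\<lambda>_. count_space UNIV) (\<lambda>(j, k). s j k)
                    ({1..N} \<times> {1..})"
    and s_distr: "\<And>j k w. j \<in> {1..N} \<Longrightarrow> k \<ge> 1 \<Longrightarrow> w \<in> S j \<Longrightarrow>
                    measure M {\<omega> \<in> space M. s j k \<omega> = w} = lik j w \<theta>s"
    and A_nonneg: "\<And>t \<omega> i' j. t \<ge> 1 \<Longrightarrow> \<omega> \<in> space M \<Longrightarrow> i' \<in> {1..N} \<Longrightarrow> j \<in> {1..N}
                    \<Longrightarrow> A t \<omega> i' j \<ge> 0"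
    and A_stoch: "\<And>t \<omega> i'. t \<ge> 1 \<Longrightarrow> \<omega> \<in> space M \<Longrightarrow> i' \<in> {1..N}
                    \<Longrightarrow> (\<Sum>j\<in>{1..N}. A t \<omega> i' j) = 1"
    and \<beta>: "0 < \<beta>" "\<beta> \<le> 1"
    and \<nu>: "\<nu> \<ge> 1"
    and \<pi>_nonneg: "\<And>r \<omega> j. r \<ge> 1 \<Longrightarrow> \<omega> \<in> space M \<Longrightarrow> j \<in> {1..N} \<Longrightarrow> \<pi> r \<omega> j \<ge> 0"
    and \<pi>_stoch: "\<And>r \<omega>. r \<ge> 1 \<Longrightarrow> \<omega> \<in> space M \<Longrightarrow> (\<Sum>j\<in>{1..N}. \<pi> r \<omega> j) = 1"
    and \<pi>_lim: "\<And>r \<omega> i' j. r \<ge> 1 \<Longrightarrow> \<omega> \<in> space M \<Longrightarrow> i' \<in> {1..N} \<Longrightarrow> j \<in> {1..N} \<Longrightarrow>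
                    (\<lambda>t. Phi N (\<lambda>t'. A t' \<omega>) t r i' j) \<longlonglongrightarrow> \<pi> r \<omega> j"
    and \<pi>_rate: "\<And>t r \<omega> i' j. 1 \<le> r \<Longrightarrow> r \<le> t \<Longrightarrow> \<omega> \<in> space M \<Longrightarrow> i' \<in> {1..N} \<Longrightarrow> j \<in> {1..N} \<Longrightarrow>
                    \<bar>Phi N (\<lambda>t'. A t' \<omega>) t r i' j - \<pi> r \<omega> j\<bar>
                      \<le> (1 - \<beta> ^ \<nu>) ^ nat \<lceil>real (t - r + 1) / real \<nu>\<rceil>"
    and i: "i \<in> {1..N}"
    and \<theta>: "\<theta> \<noteq> \<theta>s"
  shows "AE \<omega> in M.
           (\<lambda>t. (1 / (real t)\<^sup>2) *
              (\<Sum>r = 1..t.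
                 (\<Sum>j = 1..N. Phi N (\<lambda>t'. A t' \<omega>) t (r + 1) i j *
                                 (\<Sum>k = 1..r. LLR lik s j k \<theta> \<theta>s \<omega>))
                 - real r * (\<Sum>j = 1..N. \<pi> (r + 1) \<omega> j * Hdiv S lik j \<theta> \<theta>s)))
           \<longlonglongrightarrow> 0"
proof -
  interpret P: prob_space M by (rule M)
  define g where "g j w = ln (lik j w \<theta> / lik j w \<theta>s)" for j w
  define H where "H j = Hdiv S lik j \<theta> \<theta>s" for j
  have L_eq: "LLR lik s j k \<theta> \<theta>s \<omega> = g j (s j k \<omega>)" for j k \<omega> by (simp add: LLR_def g_def)
  have s_meas: "s j k \<in> measurable M (count_space UNIV)" if "j \<in> {1..N}" "k \<ge> 1" for j k
    using s_indep that unfolding P.indep_vars_def by auto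
  have L_meas: "(\<lambda>\<omega>. LLR lik s j k \<theta> \<theta>s \<omega>) \<in> borel_measurable M" if "j \<in> {1..N}" "k \<ge> 1" for j k
    unfolding L_eq by (rule measurable_compose[OF s_meas[OF that]]) simp
  define C where "C = 1 + (\<Sum>j\<in>{1..N}. \<Sum>w\<in>S j. \<bar>g j w\<bar>)"
  have C1: "C \<ge> 1" unfolding C_def by (simp add: sum_nonneg)
  have Lb: "\<bar>LLR lik s j k \<theta> \<theta>s \<omega>\<bar> \<le> C" if j: "j \<in> {1..N}" and k: "k \<ge> 1" and w: "\<omega> \<in> space M" for j k \<omega>
  proof -
    have "\<bar>g j (s j k \<omega>)\<bar> \<le> (\<Sum>w\<in>S j. \<bar>g j w\<bar>)"
      using S_fin[OF j] s_range[OF j k w] by (intro member_le_sum) auto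
    also have "\<dots> \<le> (\<Sum>j\<in>{1..N}. \<Sum>w\<in>S j. \<bar>g j w\<bar>)"
      using j by (intro member_le_sum) (auto simp: sum_nonneg)
    finally show ?thesis unfolding L_eq C_def by simp
  qed
  have EL: "P.expectation (\<lambda>\<omega>. LLR lik s j k \<theta> \<theta>s \<omega>) = H j" if j: "j \<in> {1..N}" and k: "k \<ge> 1" for j k
  proof -
    have sets: "{\<omega>\<in>space M. s j k \<omega> = w} \<in> sets M" for w
      using measurable_sets[OF s_meas[OF j k], of "{w}"] by (simp add: vimage_def Int_def conj_commute)
    have "P.expectation (\<lambda>\<omega>. LLR lik s j k \<theta> \<theta>s \<omega>)
        = P.expectation (\<lambda>\<omega>. \<Sum>w\<in>S j. g j w * indicator {\<omega>\<in>space M. s j k \<omega> = w} \<omega>)"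
    proof (rule Bochner_Integration.integral_cong[OF refl])
      fix \<omega> assume w: "\<omega> \<in> space M"
      have "(\<Sum>w\<in>S j. g j w * indicator {\<omega>\<in>space M. s j k \<omega> = w} \<omega>)
          = (\<Sum>w\<in>S j. if w = s j k \<omega> then g j w else 0)"
        using w by (intro sum.cong) (auto simp: indicator_def)
      also have "\<dots> = g j (s j k \<omega>)" using S_fin[OF j] s_range[OF j k w] by simp
      finally show "LLR lik s j k \<theta> \<theta>s \<omega> = (\<Sum>w\<in>S j. g j w * indicator {\<omega>\<in>space M. s j k \<omega> = w} \<omega>)"
        unfolding L_eq by simp
    qed
    also have "\<dots> = (\<Sum>w\<in>S j. P.expectation (\<lambda>\<omega>. g j w * indicator {\<omega>\<in>space M. s j k \<omega> = w} \<omega>))"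
      by (intro Bochner_Integration.integral_sum integrable_mult_right integrable_real_indicator sets)
         (auto simp: less_top[symmetric] P.emeasure_finite)
    also have "\<dots> = (\<Sum>w\<in>S j. g j w * lik j w \<theta>s)"
    proof (intro sum.cong refl)
      fix w assume "w \<in> S j"
      then show "P.expectation (\<lambda>\<omega>. g j w * indicator {\<omega>\<in>space M. s j k \<omega> = w} \<omega>) = g j w * lik j w \<theta>s"
        using s_distr[OF j k] by (simp add: Int_absorb2)
    qed
    also have "\<dots> = H j" unfolding H_def Hdiv_def g_def by (simp add: mult.commute)
    finally show ?thesis .
  qed
  have indepL: "P.indep_vars (\<lambda>_. borel) (\<lambda>k \<omega>. LLR lik s j k \<theta> \<theta>s \<omega>) {1..r}" if j: "j \<in> {1..N}" for j r
  proof -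
    have sub: "(\<lambda>k. (j, k)) ` {1..r} \<subseteq> {1..N} \<times> {1..}" using j by auto
    have "P.indep_vars (\<lambda>_. count_space UNIV) (\<lambda>(j, k). s j k) ((\<lambda>k. (j, k)) ` {1..r})"
      by (rule P.indep_vars_subset[OF s_indep sub])
    from P.indep_vars_reindex[OF this] have "P.indep_vars (\<lambda>_. count_space UNIV) (\<lambda>k. s j k) {1..r}"
      by (simp add: inj_on_def)
    from P.indep_vars_compose2[OF this, of "\<lambda>_. g j" "\<lambda>_. borel"]
    have "P.indep_vars (\<lambda>_. borel) (\<lambda>k \<omega>. g j (s j k \<omega>)) {1..r}" by simp
    then show ?thesis unfolding L_eq .
  qed
  have slln: "AE \<omega> in M. eventually (\<lambda>r. \<bar>(\<Sum>k=1..r. LLR lik s j k \<theta> \<theta>s \<omega>) - real r * H j\<bar> \<le> \<epsilon> * real r) sequentially"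
    if j: "j \<in> {1..N}" and \<epsilon>: "\<epsilon> > 0" for j \<epsilon>
  proof -
    define D where "D r \<omega> = (\<Sum>k=1..r. LLR lik s j k \<theta> \<theta>s \<omega>)" for r \<omega>
    define As where "As r = {\<omega>\<in>space M. \<epsilon> * real r \<le> \<bar>D r \<omega> - real r * H j\<bar>}" for r
    define q where "q = exp (- (\<epsilon>\<^sup>2 / (2 * C\<^sup>2)))"
    have Dm[measurable]: "D r \<in> borel_measurable M" for r
      unfolding D_def by (intro borel_measurable_sum L_meas[OF j]) auto
    have Asm[measurable]: "As r \<in> sets M" for r unfolding As_def by measurable
    have q: "0 < q" "q < 1" unfolding q_def using \<epsilon> C1 by auto
    have bound: "measure M (As r) \<le> 2 * q ^ r" for r
    proof (cases "r = 0")
      case True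
      have "measure M (As 0) \<le> 1" by (rule P.prob_le_1)
      then have "measure M (As 0) \<le> 2" by linarith
      then show ?thesis using True by simp
    next
      case False
      interpret Ho: Hoeffding_ineq M "{1..r}" "\<lambda>k \<omega>. LLR lik s j k \<theta> \<theta>s \<omega>" "\<lambda>_. - C" "\<lambda>_. C" "real r * H j"
      proof unfold_locales
        show "P.indep_vars (\<lambda>_. borel) (\<lambda>k \<omega>. LLR lik s j k \<theta> \<theta>s \<omega>) {1..r}" by (rule indepL[OF j])
        fix k assume k: "k \<in> {1..r}"
        show "AE x in M. LLR lik s j k \<theta> \<theta>s x \<in> {- C..C}"
          using Lb[OF j] k by (intro AE_I2) (force simp: abs_le_iff)
      next
        show "real r * H j \<equiv> (\<Sum>k\<in>{1..r}. P.expectation (\<lambda>\<omega>. LLR lik s j k \<theta> \<theta>s \<omega>))"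
          using EL[OF j] by simp
      qed simp
      have "measure M (As r) \<le> 2 * exp (- 2 * (\<epsilon> * real r)\<^sup>2 / (\<Sum>i\<in>{1..r}. (C - - C)\<^sup>2))"
        using Ho.Hoeffding_ineq_abs_ge[of "\<epsilon> * real r"] \<epsilon> C1 False
        unfolding As_def D_def by simp
      also have "- 2 * (\<epsilon> * real r)\<^sup>2 / (\<Sum>i\<in>{1..r}. (C - - C)\<^sup>2) = real r * (- (\<epsilon>\<^sup>2 / (2 * C\<^sup>2)))"
        using False C1 by (simp add: field_simps power2_eq_square)
      also have "exp \<dots> = q ^ r" unfolding q_def by (rule exp_of_nat_mult)
      finally show ?thesis .
    qed
    have summ: "summable (\<lambda>r. measure M (As r))"
    proof (rule summable_comparison_test')
      show "summable (\<lambda>r. 2 * q ^ r)" using q by (intro summable_mult summable_geometric) auto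
      show "norm (measure M (As r)) \<le> 2 * q ^ r" for r using bound[of r] by simp
    qed
    have "AE \<omega> in M. eventually (\<lambda>r. \<omega> \<in> space M - As r) sequentially"
      by (rule borel_cantelli_AE1[OF Asm _ summ]) (auto simp: less_top[symmetric] P.emeasure_finite)
    then show ?thesis
    proof (rule AE_mp[OF _ AE_I2], intro impI)
      fix \<omega> assume "eventually (\<lambda>r. \<omega> \<in> space M - As r) sequentially"
      then show "eventually (\<lambda>r. \<bar>(\<Sum>k=1..r. LLR lik s j k \<theta> \<theta>s \<omega>) - real r * H j\<bar> \<le> \<epsilon> * real r) sequentially"
        by (rule eventually_mono) (auto simp: As_def D_def)
    qed
  qed
  have "AE \<omega> in M. \<forall>j\<in>{1..N}. \<forall>m::nat. eventually (\<lambda>r. \<bar>(\<Sum>k=1..r. LLR lik s j k \<theta> \<theta>s \<omega>) - real r * H j\<bar>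
              \<le> (1 / real (Suc m)) * real r) sequentially"
    by (intro AE_finite_allI finite_atLeastAtMost AE_all_countable[THEN iffD2] allI slln) auto
  moreover have "AE \<omega> in M. \<omega> \<in> space M" by (rule AE_space)
  ultimately show ?thesis
  proof eventually_elim
    case (elim \<omega>)
    define q where "q = 1 - \<beta> ^ \<nu>"
    define \<rho> where "\<rho> = root \<nu> q"
    have q: "0 \<le> q" "q < 1" unfolding q_def using \<beta> by (auto intro: power_le_one)
    have \<rho>: "0 \<le> \<rho>" "\<rho> < 1" "\<rho> ^ \<nu> = q" unfolding \<rho>_def using q \<nu>
      by (auto simp: real_root_lt_1_iff real_root_pow_pos2)
    have \<pi>b: "0 \<le> \<pi> r \<omega> j \<and> \<pi> r \<omega> j \<le> 1" if "r \<ge> 1" "j \<in> {1..N}" for r j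
    proof -
      have "\<pi> r \<omega> j \<le> (\<Sum>j\<in>{1..N}. \<pi> r \<omega> j)"
        using that elim \<pi>_nonneg by (intro member_le_sum) auto
      then show ?thesis using \<pi>_stoch[of r \<omega>] \<pi>_nonneg[of r \<omega> j] that elim by auto
    qed
    show ?case
      unfolding H_def[symmetric]
    proof (rule det_limit[where Ph = "\<lambda>t r j. Phi N (\<lambda>t'. A t' \<omega>) t r i j" and C = C and \<rho> = \<rho>])
      show "0 \<le> C" using C1 by simp
      show "\<bar>LLR lik s j k \<theta> \<theta>s \<omega>\<bar> \<le> C" if "j \<in> {1..N}" "1 \<le> k" for j k using Lb that elim by auto
      show "0 \<le> \<rho>" "\<rho> < 1" using \<rho> by auto
      show "\<bar>Phi N (\<lambda>t'. A t' \<omega>) t (r + 1) i j - \<pi> (r + 1) \<omega> j\<bar> \<le> \<rho> ^ (t - r)"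
        if "1 \<le> r" "r < t" "j \<in> {1..N}" for t r j
      proof -
        define c where "c = nat \<lceil>real (t - (r + 1) + 1) / real \<nu>\<rceil>"
        have "\<bar>Phi N (\<lambda>t'. A t' \<omega>) t (r + 1) i j - \<pi> (r + 1) \<omega> j\<bar> \<le> q ^ c"
          unfolding c_def q_def using \<pi>_rate[of "r+1" t \<omega> i j] that elim i by auto
        also have "q ^ c = \<rho> ^ (\<nu> * c)" using \<rho> by (simp add: power_mult)
        also have "\<dots> \<le> \<rho> ^ (t - r)"
        proof (rule power_decreasing)
          have "real (t - r) / real \<nu> \<le> real c" unfolding c_def using that by simp
          then have "real (t - r) \<le> real \<nu> * real c" using \<nu> by (simp add: field_simps)
          then show "t - r \<le> \<nu> * c" by (simp flip: of_nat_mult)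
        qed (use \<rho> in auto)
        finally show ?thesis .
      qed
      show "\<bar>Phi N (\<lambda>t'. A t' \<omega>) t (t + 1) i j - \<pi> (t + 1) \<omega> j\<bar> \<le> 2" if "j \<in> {1..N}" for t j
        using \<pi>b[of "t+1" j] that unfolding Phi_id by (auto simp: ident_mat_def)
      show "\<bar>\<pi> r \<omega> j\<bar> \<le> 1" if "j \<in> {1..N}" "1 \<le> r" for r j using \<pi>b[of r j] that by auto
      show "eventually (\<lambda>r. \<bar>(\<Sum>k = 1..r. LLR lik s j k \<theta> \<theta>s \<omega>) - real r * H j\<bar> \<le> \<epsilon> * real r) sequentially"
        if j: "j \<in> {1..N}" and \<epsilon>: "0 < \<epsilon>" for j \<epsilon>
      proof -
        obtain m where m: "inverse (real (Suc m)) < \<epsilon>" using reals_Archimedean[OF \<epsilon>] by blast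
        from elim j have "eventually (\<lambda>r. \<bar>(\<Sum>k=1..r. LLR lik s j k \<theta> \<theta>s \<omega>) - real r * H j\<bar>
              \<le> (1 / real (Suc m)) * real r) sequentially" by auto
        then show ?thesis
        proof (rule eventually_mono)
          fix r assume "\<bar>(\<Sum>k=1..r. LLR lik s j k \<theta> \<theta>s \<omega>) - real r * H j\<bar> \<le> (1 / real (Suc m)) * real r"
          moreover have "(1 / real (Suc m)) * real r \<le> \<epsilon> * real r"
            using m by (intro mult_right_mono) (auto simp: field_simps)
          ultimately show "\<bar>(\<Sum>k=1..r. LLR lik s j k \<theta> \<theta>s \<omega>) - real r * H j\<bar> \<le> \<epsilon> * real r" by linarith
        qed
      qed
    qed
  qed
qed

end
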